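(* Let $F$ be a minimally unsatisfiable clause-set and $C\in F$. Let $C' := \{x\in C : \mathrm{ldeg}_F(x)=1\}$, and for $x\in C'$ let $F_x := \{D\in F : \overline{x}\in D\}$. Assume $|C'|\ge2$ and that for every $x\in C'$ the clause-set $\mathrm{DP}_{\mathrm{var}(x)}(F)$ is saturated minimally unsatisfiable. Then: 1. $|C'|=2$. 2. For all $x\in C'$ and all $D\in F_x$: $C\setminus C'\subseteq D$. 3. For $x,y\in C'$, the clause-sets $\mathrm{DP}_{\mathrm{var}(x)}(F)$ and $\mathrm{DP}_{\mathrm{var}(y)}(F)$ are isomorphic.
   Context: Literals are variables $v$ and complements $\overline{v}$; a clause is a finite set of literals with no complementary pair; a clause-set is a finite set of clauses; $\mathrm{var}(F)$ is the set of variables of $F$, $\mathrm{var}(x)$ the variable of literal $x$; $\mathrm{ldeg}_F(x)$ is the number of clauses of $F$ containing literal $x$. $\mathrm{DP}_v(F) := \{C \in F : v \notin \mathrm{var}(C)\} \cup \{(C \cup D)\setminus\{v,\overline{v}\} : C, D \in F,\ C \cap \overline{D} = \{v\}\}$. A minimally unsatisfiable $F$ is saturated if for every $C \in F$ and every literal $y$ with $\mathrm{var}(y) \in \mathrm{var}(F)\setminus \mathrm{var}(C)$, the clause-set $(F\setminus\{C\})\cup\{C\cup\{y\}\}$ is satisfiable. Clause-sets are isomorphic if a complement-preserving bijection on literals maps the clauses of one exactly onto the clauses of the other. *)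

theory Defs
  imports Main
begin

datatype 'v lit = Pos 'v | Neg 'v

fun comp :: "'v lit \<Rightarrow> 'v lit" where
  "comp (Pos v) = Neg v"
| "comp (Neg v) = Pos v"

fun var :: "'v lit \<Rightarrow> 'v" where
  "var (Pos v) = v"
| "var (Neg v) = v"

type_synonym 'v clause = "'v lit set"
type_synonym 'v cls = "'v lit set set"

definition is_clause :: "'v clause \<Rightarrow> bool" where
  "is_clause C \<longleftrightarrow> finite C \<and> (\<forall>x\<in>C. comp x \<notin> C)"

definition is_clause_set :: "'v cls \<Rightarrow> bool" where
  "is_clause_set F \<longleftrightarrow> finite F \<and> (\<forall>C\<in>F. is_clause C)"

definition vars_cl :: "'v clause \<Rightarrow> 'v set" where
  "vars_cl C = var ` C"

definition vars :: "'v cls \<Rightarrow> 'v set" where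
  "vars F = (\<Union>C\<in>F. vars_cl C)"

fun lit_val :: "('v \<Rightarrow> bool) \<Rightarrow> 'v lit \<Rightarrow> bool" where
  "lit_val \<phi> (Pos v) = \<phi> v"
| "lit_val \<phi> (Neg v) = (\<not> \<phi> v)"

definition satisfiable :: "'v cls \<Rightarrow> bool" where
  "satisfiable F \<longleftrightarrow> (\<exists>\<phi>. \<forall>C\<in>F. \<exists>x\<in>C. lit_val \<phi> x)"

definition min_unsat :: "'v cls \<Rightarrow> bool" where
  "min_unsat F \<longleftrightarrow> is_clause_set F \<and> \<not> satisfiable F \<and> (\<forall>C\<in>F. satisfiable (F - {C}))"

definition saturated_min_unsat :: "'v cls \<Rightarrow> bool" where
  "saturated_min_unsat F \<longleftrightarrow> min_unsat F \<and>
     (\<forall>C\<in>F. \<forall>y. var y \<in> vars F - vars_cl C \<longrightarrow> satisfiable ((F - {C}) \<union> {C \<union> {y}}))"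

definition ldeg :: "'v cls \<Rightarrow> 'v lit \<Rightarrow> nat" where
  "ldeg F x = card {C\<in>F. x \<in> C}"

definition DP :: "'v \<Rightarrow> 'v cls \<Rightarrow> 'v cls" where
  "DP v F = {C\<in>F. v \<notin> vars_cl C} \<union>
     {(C \<union> D) - {Pos v, Neg v} | C D. C \<in> F \<and> D \<in> F \<and> C \<inter> comp ` D = {Pos v}}"

definition isomorphic :: "'v cls \<Rightarrow> 'v cls \<Rightarrow> bool" where
  "isomorphic F G \<longleftrightarrow> (\<exists>f :: 'v lit \<Rightarrow> 'v lit. bij f \<and> (\<forall>x. f (comp x) = comp (f x))
      \<and> (\<lambda>C. f ` C) ` F = G)"

end

theory Submission
  imports Defs
begin


lemma comp_comp[simp]: "comp (comp x) = x" by (cases x) auto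
lemma var_comp[simp]: "var (comp x) = var x" by (cases x) auto
lemma comp_neq[simp]: "comp x \<noteq> x" by (cases x) auto
lemma comp_neq'[simp]: "x \<noteq> comp x" by (cases x) auto
lemma comp_inj[simp]: "comp x = comp y \<longleftrightarrow> x = y" by (metis comp_comp)
lemma lit_val_comp[simp]: "lit_val \<phi> (comp x) = (\<not> lit_val \<phi> x)" by (cases x) auto
lemma var_eq: "var u = var x \<Longrightarrow> u = x \<or> u = comp x"
  by (cases u; cases x) auto
lemma posneg: "{Pos (var x), Neg (var x)} = {x, comp x}" by (cases x) auto

definition setlit :: "('v \<Rightarrow> bool) \<Rightarrow> 'v lit \<Rightarrow> ('v \<Rightarrow> bool)" where
  "setlit \<psi> w = \<psi>(var w := (w = Pos (var w)))"

lemma lit_val_setlit: "lit_val (setlit \<psi> w) u = (if var u = var w then u = w else lit_val \<psi> u)"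
  unfolding setlit_def by (cases u; cases w) auto

lemma mu_unsat: "min_unsat G \<Longrightarrow> \<not> satisfiable G" by (simp add: min_unsat_def)
lemma mu_min: "min_unsat G \<Longrightarrow> P\<in>G \<Longrightarrow> \<exists>\<psi>. \<forall>Q\<in>G-{P}. \<exists>u\<in>Q. lit_val \<psi> u"
  unfolding min_unsat_def satisfiable_def by blast
lemma mu_clause: "min_unsat G \<Longrightarrow> P\<in>G \<Longrightarrow> u \<in> P \<Longrightarrow> comp u \<notin> P"
  unfolding min_unsat_def is_clause_set_def is_clause_def by blast
lemma mu_finite: "min_unsat G \<Longrightarrow> finite G"
  unfolding min_unsat_def is_clause_set_def by blast

lemma no_pure:
  assumes "min_unsat G" "P \<in> G" "w \<in> P"
  shows "\<exists>Q\<in>G. comp w \<in> Q"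
proof (rule ccontr)
  assume na: "\<not> ?thesis"
  obtain \<psi> where ps: "\<forall>Q\<in>G-{P}. \<exists>u\<in>Q. lit_val \<psi> u" using mu_min[OF assms(1,2)] by blast
  have "satisfiable G" unfolding satisfiable_def
  proof (intro exI[of _ "setlit \<psi> w"] ballI)
    fix Q assume Q: "Q \<in> G"
    show "\<exists>u\<in>Q. lit_val (setlit \<psi> w) u"
    proof (cases "Q = P")
      case True then show ?thesis using assms(3) by (auto simp: lit_val_setlit)
    next
      case False
      then obtain u where "u \<in> Q" "lit_val \<psi> u" using ps Q by blast
      moreover have "comp w \<notin> Q" using na Q by blast
      ultimately have "lit_val (setlit \<psi> w) u"
        using var_eq[of u w] by (cases "var u = var w") (auto simp: lit_val_setlit)
      then show ?thesis using \<open>u \<in> Q\<close> by blast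
    qed
  qed
  then show False using mu_unsat[OF assms(1)] by blast
qed

lemma sat_ext: "\<forall>P\<in>G-{Q}. \<exists>u\<in>P. lit_val \<psi> u \<Longrightarrow> u \<in> Q \<Longrightarrow> lit_val \<psi> u \<Longrightarrow> satisfiable G"
  unfolding satisfiable_def by (metis Diff_iff singletonD)

lemma sat_ext2: "\<forall>P\<in>(G-{Q}) \<union> {Q'}. \<exists>u\<in>P. lit_val \<psi> u \<Longrightarrow> \<forall>P\<in>G-{Q}. \<exists>u\<in>P. lit_val \<psi> u"
  by blast

lemma keyL:
  assumes sat: "saturated_min_unsat G" and vne: "var w \<noteq> var z"
    and wz: "\<forall>P\<in>G. w \<in> P \<longrightarrow> z \<in> P" and ez: "\<exists>P\<in>G. z \<in> P"
    and Q: "Q \<in> G" "comp w \<in> Q"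
  shows "z \<in> Q"
proof (rule ccontr)
  assume zQ: "z \<notin> Q"
  have mu: "min_unsat G" using sat by (simp add: saturated_min_unsat_def)
  have "\<exists>\<psi>. (\<forall>P\<in>G-{Q}. \<exists>u\<in>P. lit_val \<psi> u) \<and> lit_val \<psi> z \<and> (\<forall>u\<in>Q. \<not> lit_val \<psi> u)"
  proof (cases "var z \<in> vars_cl Q")
    case True
    then obtain u where u: "u \<in> Q" "var u = var z" unfolding vars_cl_def by auto
    then have cz: "comp z \<in> Q" using zQ var_eq[of u z] by auto
    obtain \<psi> where ps: "\<forall>P\<in>G-{Q}. \<exists>u\<in>P. lit_val \<psi> u" using mu_min[OF mu Q(1)] by blast
    have "\<forall>u\<in>Q. \<not> lit_val \<psi> u"
    proof (rule ccontr)
      assume "\<not> (\<forall>u\<in>Q. \<not> lit_val \<psi> u)"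
      then have "satisfiable G" using sat_ext[OF ps] by blast
      then show False using mu_unsat[OF mu] by blast
    qed
    moreover have "\<not> lit_val \<psi> (comp z)" using cz calculation by blast
    then have "lit_val \<psi> z" by simp
    ultimately show ?thesis using ps by blast
  next
    case False
    obtain P0 where "P0 \<in> G" "z \<in> P0" using ez by blast
    then have "var z \<in> vars G" unfolding vars_def vars_cl_def by blast
    moreover have s: "\<forall>C\<in>G. \<forall>y. var y \<in> vars G - vars_cl C \<longrightarrow> satisfiable ((G - {C}) \<union> {C \<union> {y}})"
      using sat unfolding saturated_min_unsat_def by (elim conjE)
    ultimately have "satisfiable ((G - {Q}) \<union> {Q \<union> {z}})"
      using s[rule_format, OF Q(1), of z] False by blast
    then obtain \<psi> where ps0: "\<forall>P\<in>(G - {Q}) \<union> {Q \<union> {z}}. \<exists>u\<in>P. lit_val \<psi> u"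
      unfolding satisfiable_def by blast
    have ps: "\<forall>P\<in>G-{Q}. \<exists>u\<in>P. lit_val \<psi> u" using sat_ext2[OF ps0] .
    have nq: "\<forall>u\<in>Q. \<not> lit_val \<psi> u"
    proof (rule ccontr)
      assume "\<not> (\<forall>u\<in>Q. \<not> lit_val \<psi> u)"
      then have "satisfiable G" using sat_ext[OF ps] by blast
      then show False using mu_unsat[OF mu] by blast
    qed
    then have "lit_val \<psi> z" using ps0 by auto
    then show ?thesis using ps nq by blast
  qed
  then obtain \<psi> where ps: "\<forall>P\<in>G-{Q}. \<exists>u\<in>P. lit_val \<psi> u" and pz: "lit_val \<psi> z"
    and nq: "\<forall>u\<in>Q. \<not> lit_val \<psi> u" by blast
  have "satisfiable G" unfolding satisfiable_def
  proof (intro exI[of _ "setlit \<psi> (comp w)"] ballI)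
    fix P assume P: "P \<in> G"
    show "\<exists>u\<in>P. lit_val (setlit \<psi> (comp w)) u"
    proof (cases "P = Q")
      case True
      have "lit_val (setlit \<psi> (comp w)) (comp w)" by (simp add: lit_val_setlit)
      then show ?thesis using Q(2) True by blast
    next
      case False
      show ?thesis
      proof (cases "w \<in> P")
        case True
        then have "z \<in> P" using wz P by blast
        then show ?thesis using pz vne by (intro bexI[of _ z]) (auto simp: lit_val_setlit)
      next
        case wP: False
        obtain u where u: "u \<in> P" "lit_val \<psi> u" using ps P False by blast
        then have "lit_val (setlit \<psi> (comp w)) u"
          using var_eq[of u w] wP by (cases "var u = var w") (auto simp: lit_val_setlit)
        then show ?thesis using u by blast
      qed
    qed
  qed
  then show False using mu_unsat[OF mu] by blast
qed



lemma res_char: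
  assumes C: "C \<in> F" "x \<in> C" and only: "\<forall>E\<in>F. x \<in> E \<longrightarrow> E = C"
  shows "P \<in> {(C1 \<union> D1) - {Pos (var x), Neg (var x)} | C1 D1. C1 \<in> F \<and> D1 \<in> F \<and> C1 \<inter> comp ` D1 = {Pos (var x)}}
     \<longleftrightarrow> (\<exists>D\<in>F. comp x \<in> D \<and> (\<forall>u\<in>C. comp u \<in> D \<longrightarrow> u = x) \<and> P = (C \<union> D) - {x, comp x})"
proof (cases x)
  case (Pos v)
  show ?thesis
  proof
    assume "P \<in> {(C1 \<union> D1) - {Pos (var x), Neg (var x)} | C1 D1. C1 \<in> F \<and> D1 \<in> F \<and> C1 \<inter> comp ` D1 = {Pos (var x)}}"
    then obtain C1 D1 where h: "C1 \<in> F" "D1 \<in> F" "C1 \<inter> comp ` D1 = {Pos v}" "P = (C1 \<union> D1) - {Pos v, Neg v}"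
      using Pos by auto
    have "Pos v \<in> C1" using h(3) by blast
    then have c1: "C1 = C" using only h(1) Pos by simp
    have "Pos v \<in> comp ` D1" using h(3) by blast
    then obtain d where "d \<in> D1" "Pos v = comp d" by (rule imageE)
    then have n1: "Neg v \<in> D1" by (cases d) auto
    have "\<forall>u\<in>C. comp u \<in> D1 \<longrightarrow> u = x"
    proof (intro ballI impI)
      fix u assume "u \<in> C" "comp u \<in> D1"
      moreover have "u = comp (comp u)" by simp
      ultimately have "u \<in> C1 \<inter> comp ` D1" using \<open>C1 = C\<close> by blast
      then show "u = x" using h(3) Pos by auto
    qed
    then show "\<exists>D\<in>F. comp x \<in> D \<and> (\<forall>u\<in>C. comp u \<in> D \<longrightarrow> u = x) \<and> P = (C \<union> D) - {x, comp x}"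
      using h(2,4) Pos c1 n1 by (intro bexI[of _ D1]) simp_all
  next
    assume "\<exists>D\<in>F. comp x \<in> D \<and> (\<forall>u\<in>C. comp u \<in> D \<longrightarrow> u = x) \<and> P = (C \<union> D) - {x, comp x}"
    then obtain D where h: "D \<in> F" "comp x \<in> D" "\<forall>u\<in>C. comp u \<in> D \<longrightarrow> u = x" "P = (C \<union> D) - {x, comp x}" by blast
    have "C \<inter> comp ` D = {Pos v}"
    proof
      show "C \<inter> comp ` D \<subseteq> {Pos v}" using h(3) Pos by auto
      show "{Pos v} \<subseteq> C \<inter> comp ` D" using C h(2) Pos by (auto intro: image_eqI[of _ _ "Neg v"])
    qed
    moreover have "P = (C \<union> D) - {Pos v, Neg v}" using h(4) Pos by simp
    ultimately show "P \<in> {(C1 \<union> D1) - {Pos (var x), Neg (var x)} | C1 D1. C1 \<in> F \<and> D1 \<in> F \<and> C1 \<inter> comp ` D1 = {Pos (var x)}}"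
      using h(1) C(1) Pos by (simp only: var.simps) blast
  qed
next
  case (Neg v)
  show ?thesis
  proof
    assume "P \<in> {(C1 \<union> D1) - {Pos (var x), Neg (var x)} | C1 D1. C1 \<in> F \<and> D1 \<in> F \<and> C1 \<inter> comp ` D1 = {Pos (var x)}}"
    then obtain C1 D1 where h: "C1 \<in> F" "D1 \<in> F" "C1 \<inter> comp ` D1 = {Pos v}" "P = (C1 \<union> D1) - {Pos v, Neg v}"
      using Neg by auto
    have "Pos v \<in> comp ` D1" using h(3) by blast
    then obtain d where "d \<in> D1" "Pos v = comp d" by (rule imageE)
    then have "Neg v \<in> D1" by (cases d) auto
    then have d1: "D1 = C" using only h(2) Neg by simp
    have p1: "Pos v \<in> C1" using h(3) by blast
    have "\<forall>u\<in>C. comp u \<in> C1 \<longrightarrow> u = x"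
    proof (intro ballI impI)
      fix u assume "u \<in> C" "comp u \<in> C1"
      then have "comp u \<in> C1 \<inter> comp ` D1" using d1 by blast
      then have "comp u = Pos v" using h(3) by blast
      then show "u = x" using Neg by (cases u) auto
    qed
    moreover have "P = (C \<union> C1) - {x, comp x}" using h(4) d1 Neg by (simp add: Un_commute insert_commute)
    ultimately show "\<exists>D\<in>F. comp x \<in> D \<and> (\<forall>u\<in>C. comp u \<in> D \<longrightarrow> u = x) \<and> P = (C \<union> D) - {x, comp x}"
      using h(1) p1 Neg by (intro bexI[of _ C1]) simp_all
  next
    assume "\<exists>D\<in>F. comp x \<in> D \<and> (\<forall>u\<in>C. comp u \<in> D \<longrightarrow> u = x) \<and> P = (C \<union> D) - {x, comp x}"
    then obtain D where h: "D \<in> F" "comp x \<in> D" "\<forall>u\<in>C. comp u \<in> D \<longrightarrow> u = x" "P = (C \<union> D) - {x, comp x}" by blast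
    have "D \<inter> comp ` C = {Pos v}"
    proof
      show "D \<inter> comp ` C \<subseteq> {Pos v}" using h(3) Neg by auto
      show "{Pos v} \<subseteq> D \<inter> comp ` C" using C h(2) Neg by (auto intro: image_eqI[of _ _ "Neg v"])
    qed
    moreover have "P = (D \<union> C) - {Pos v, Neg v}" using h(4) Neg by (simp add: Un_commute insert_commute)
    ultimately show "P \<in> {(C1 \<union> D1) - {Pos (var x), Neg (var x)} | C1 D1. C1 \<in> F \<and> D1 \<in> F \<and> C1 \<inter> comp ` D1 = {Pos (var x)}}"
      using h(1) C(1) Neg by (simp only: var.simps) blast
  qed
qed

lemma DP_char:
  assumes C: "C \<in> F" "x \<in> C" and only: "\<forall>E\<in>F. x \<in> E \<longrightarrow> E = C"
  shows "P \<in> DP (var x) F \<longleftrightarrow> (P \<in> F \<and> var x \<notin> vars_cl P) \<or>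
     (\<exists>D\<in>F. comp x \<in> D \<and> (\<forall>u\<in>C. comp u \<in> D \<longrightarrow> u = x) \<and> P = (C \<union> D) - {x, comp x})"
  using res_char[OF assms, of P] unfolding DP_def by blast



lemma comp_eq_iff: "comp u = v \<longleftrightarrow> u = comp v" by (metis comp_comp)

lemma deg1_only:
  assumes "finite F" "C \<in> F" "x \<in> C" "ldeg F x = 1"
  shows "\<forall>E\<in>F. x \<in> E \<longrightarrow> E = C"
proof -
  have "card {E\<in>F. x \<in> E} = 1" using assms(4) by (simp add: ldeg_def)
  then obtain a where a: "{E\<in>F. x \<in> E} = {a}" by (rule card_1_singletonE)
  then have "C = a" using assms(2,3) by blast
  then show ?thesis using a by blast
qed

lemma var_ne:
  assumes "min_unsat F" "C \<in> F" "a \<in> C" "b \<in> C" "a \<noteq> b"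
  shows "var a \<noteq> var b"
  using var_eq[of a b] mu_clause[OF assms(1,2,4)] assms(3,5) by blast

lemma res_exists:
  assumes mu: "min_unsat F" and C: "C \<in> F" "x \<in> C" and only: "\<forall>E\<in>F. x \<in> E \<longrightarrow> E = C"
    and muG: "min_unsat (DP (var x) F)"
  shows "\<exists>D\<in>F. comp x \<in> D \<and> (\<forall>u\<in>C. comp u \<in> D \<longrightarrow> u = x)"
proof (rule ccontr)
  assume na: "\<not> ?thesis"
  have "DP (var x) F \<subseteq> F - {C}"
  proof
    fix P assume "P \<in> DP (var x) F"
    then have "P \<in> F \<and> var x \<notin> vars_cl P" using DP_char[OF C only, of P] na by blast
    moreover have "var x \<in> vars_cl C" using C(2) unfolding vars_cl_def by blast
    ultimately show "P \<in> F - {C}" by blast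
  qed
  moreover obtain \<psi> where "\<forall>Q\<in>F-{C}. \<exists>u\<in>Q. lit_val \<psi> u" using mu_min[OF mu C(1)] by blast
  ultimately have "satisfiable (DP (var x) F)" unfolding satisfiable_def by blast
  then show False using mu_unsat[OF muG] by blast
qed

lemma res_mem:
  assumes mu: "min_unsat F" and C: "C \<in> F" "x \<in> C" "z \<in> C" "z \<noteq> x"
  shows "z \<in> (C \<union> D) - {x, comp x}"
  using mu_clause[OF mu C(1,2)] C by auto

lemma F3:
  assumes mu: "min_unsat F" and C: "C \<in> F" "x \<in> C" and only: "\<forall>E\<in>F. x \<in> E \<longrightarrow> E = C"
    and u: "u \<in> C" "\<forall>E\<in>F. u \<in> E \<longrightarrow> E = C" and z: "z \<in> C" "z \<noteq> x"
  shows "\<forall>P\<in>DP (var x) F. u \<in> P \<longrightarrow> z \<in> P"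
proof (intro ballI impI)
  fix P assume P: "P \<in> DP (var x) F" "u \<in> P"
  have vx: "var x \<in> vars_cl C" using C(2) unfolding vars_cl_def by blast
  from P(1) consider "P \<in> F \<and> var x \<notin> vars_cl P"
    | D where "D \<in> F" "P = (C \<union> D) - {x, comp x}"
    using DP_char[OF C only, of P] by blast
  then show "z \<in> P"
  proof cases
    case 1
    then have "P = C" using u(2) P(2) by blast
    then show ?thesis using 1 vx by blast
  next
    case 2
    then show ?thesis using res_mem[OF mu C z] by blast
  qed
qed

lemma F4:
  assumes mu: "min_unsat F" and C: "C \<in> F" "x \<in> C" and only: "\<forall>E\<in>F. x \<in> E \<longrightarrow> E = C"
    and muG: "min_unsat (DP (var x) F)" and z: "z \<in> C" "z \<noteq> x"
  shows "\<exists>P\<in>DP (var x) F. z \<in> P"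
proof -
  obtain D where D: "D \<in> F" "comp x \<in> D" "\<forall>u\<in>C. comp u \<in> D \<longrightarrow> u = x"
    using res_exists[OF mu C only muG] by blast
  then have "(C \<union> D) - {x, comp x} \<in> DP (var x) F" using DP_char[OF C only] by blast
  then show ?thesis using res_mem[OF mu C z] by blast
qed

lemma noboth:
  assumes mu: "min_unsat F" and C: "C \<in> F" "x \<in> C" and only: "\<forall>E\<in>F. x \<in> E \<longrightarrow> E = C"
    and y: "y \<in> C" "y \<noteq> x" and D: "D \<in> F" "comp x \<in> D" "comp y \<in> D"
  shows False
proof -
  obtain \<psi> where ps: "\<forall>Q\<in>F-{D}. \<exists>u\<in>Q. lit_val \<psi> u" using mu_min[OF mu D(1)] by blast
  have nd: "\<forall>u\<in>D. \<not> lit_val \<psi> u"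
  proof (rule ccontr)
    assume "\<not> (\<forall>u\<in>D. \<not> lit_val \<psi> u)"
    then have "satisfiable F" using sat_ext[OF ps] by blast
    then show False using mu_unsat[OF mu] by blast
  qed
  have py: "lit_val \<psi> y" using nd D(3) by (metis lit_val_comp)
  have vxy: "var y \<noteq> var x" using var_ne[OF mu C(1) y(1) C(2) y(2)] .
  have "satisfiable F" unfolding satisfiable_def
  proof (intro exI[of _ "setlit \<psi> (comp x)"] ballI)
    fix E assume E: "E \<in> F"
    show "\<exists>u\<in>E. lit_val (setlit \<psi> (comp x)) u"
    proof (cases "E = D")
      case True
      have "lit_val (setlit \<psi> (comp x)) (comp x)" by (simp add: lit_val_setlit)
      then show ?thesis using D(2) True by blast
    next
      case False
      show ?thesis
      proof (cases "E = C")
        case True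
        have "lit_val (setlit \<psi> (comp x)) y" using py vxy by (simp add: lit_val_setlit)
        then show ?thesis using y(1) True by blast
      next
        case nC: False
        obtain u where u: "u \<in> E" "lit_val \<psi> u" using ps E False by blast
        have "u \<noteq> x" using only E nC u(1) by blast
        then have "lit_val (setlit \<psi> (comp x)) u"
          using var_eq[of u x] u(2) by (cases "var u = var x") (auto simp: lit_val_setlit)
        then show ?thesis using u by blast
      qed
    qed
  qed
  then show False using mu_unsat[OF mu] by blast
qed



lemma res_eq:
  assumes mu: "min_unsat F" and C: "C \<in> F" "x \<in> C" "y \<in> C" "x \<noteq> y"
    and only: "\<forall>E\<in>F. x \<in> E \<longrightarrow> E = C"
    and D: "D \<in> F" "comp x \<in> D" "C - {x, y} \<subseteq> D"
  shows "(C \<union> D) - {x, comp x} = insert y (D - {comp x})"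
proof -
  have "comp x \<notin> C" using mu_clause[OF mu C(1,2)] .
  moreover have "x \<notin> D" using mu_clause[OF mu D(1) D(2)] by simp
  moreover have "y \<noteq> comp x" using var_ne[OF mu C(1) C(3) C(2)] C(4) by auto
  ultimately show ?thesis using C D by blast
qed

lemma DPeq:
  assumes mu: "min_unsat F" and C: "C \<in> F" "x \<in> C" "y \<in> C" "x \<noteq> y"
    and onlyx: "\<forall>E\<in>F. x \<in> E \<longrightarrow> E = C" and onlyy: "\<forall>E\<in>F. y \<in> E \<longrightarrow> E = C"
    and hx: "\<forall>D\<in>F. comp x \<in> D \<longrightarrow> C - {x, y} \<subseteq> D"
  shows "DP (var x) F = {P\<in>F. var x \<notin> vars_cl P \<and> var y \<notin> vars_cl P} \<union> {P\<in>F. comp y \<in> P}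
     \<union> (\<lambda>D. insert y (D - {comp x})) ` {D\<in>F. comp x \<in> D}"
proof (intro equalityI subsetI)
  fix P assume P: "P \<in> DP (var x) F"
  from P consider "P \<in> F" "var x \<notin> vars_cl P"
    | D where "D \<in> F" "comp x \<in> D" "P = (C \<union> D) - {x, comp x}"
    using DP_char[OF C(1,2) onlyx, of P] by blast
  then show "P \<in> {P\<in>F. var x \<notin> vars_cl P \<and> var y \<notin> vars_cl P} \<union> {P\<in>F. comp y \<in> P}
     \<union> (\<lambda>D. insert y (D - {comp x})) ` {D\<in>F. comp x \<in> D}"
  proof cases
    case 1
    show ?thesis
    proof (cases "var y \<in> vars_cl P")
      case True
      then obtain u where u0: "u \<in> P" "var y = var u" unfolding vars_cl_def by (rule imageE)
      then have u: "u \<in> P" "var u = var y" by simp_all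
      have "u \<noteq> y"
      proof
        assume "u = y"
        then have "P = C" using onlyy u(1) 1(1) by blast
        then show False using 1(2) C(2) unfolding vars_cl_def by blast
      qed
      then have "comp y \<in> P" using var_eq[OF u(2)] u(1) by blast
      then show ?thesis using 1(1) by blast
    next
      case False
      then show ?thesis using 1 by blast
    qed
  next
    case 2
    have "P = insert y (D - {comp x})"
      using 2 res_eq[OF mu C onlyx 2(1,2)] hx by blast
    then show ?thesis using 2(1,2) by blast
  qed
next
  fix P assume P: "P \<in> {P\<in>F. var x \<notin> vars_cl P \<and> var y \<notin> vars_cl P} \<union> {P\<in>F. comp y \<in> P}
     \<union> (\<lambda>D. insert y (D - {comp x})) ` {D\<in>F. comp x \<in> D}"
  then consider "P \<in> F" "var x \<notin> vars_cl P" | "P \<in> F" "comp y \<in> P"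
    | D where "D \<in> F" "comp x \<in> D" "P = insert y (D - {comp x})" by blast
  then show "P \<in> DP (var x) F"
  proof cases
    case 1
    then show ?thesis using DP_char[OF C(1,2) onlyx, of P] by blast
  next
    case 2
    have "x \<notin> P"
    proof
      assume "x \<in> P"
      then have "P = C" using onlyx 2(1) by blast
      then show False using mu_clause[OF mu C(1) C(3)] 2(2) by blast
    qed
    moreover have "comp x \<notin> P" using noboth[OF mu C(1,2) onlyx C(3) C(4)[symmetric] 2(1)] 2(2) by blast
    ultimately have "var x \<notin> vars_cl P"
    proof -
      assume a: "x \<notin> P" "comp x \<notin> P"
      show "var x \<notin> vars_cl P"
      proof
        assume "var x \<in> vars_cl P"
        then obtain u where "u \<in> P" "var x = var u" unfolding vars_cl_def by (rule imageE)
        then show False using var_eq[of u x] a by auto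
      qed
    qed
    then show ?thesis using DP_char[OF C(1,2) onlyx, of P] 2(1) by blast
  next
    case 3
    have ny: "comp y \<notin> D" using noboth[OF mu C(1,2) onlyx C(3) C(4)[symmetric] 3(1,2)] by blast
    have cl: "C - {x, y} \<subseteq> D" using hx 3(1,2) by blast
    have "\<forall>u\<in>C. comp u \<in> D \<longrightarrow> u = x"
    proof (intro ballI impI)
      fix u assume u: "u \<in> C" "comp u \<in> D"
      show "u = x"
      proof (rule ccontr)
        assume "u \<noteq> x"
        moreover have "u \<noteq> y" using u(2) ny by blast
        ultimately have "u \<in> D" using cl u(1) by blast
        then show False using mu_clause[OF mu 3(1)] u(2) by blast
      qed
    qed
    moreover have "P = (C \<union> D) - {x, comp x}"
      using 3(3) res_eq[OF mu C onlyx 3(1,2) cl] by simp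
    ultimately show ?thesis using DP_char[OF C(1,2) onlyx, of P] 3(1,2) by blast
  qed
qed



lemma fix_img: "\<forall>u\<in>S. f u = u \<Longrightarrow> f ` S = S"
proof -
  assume a: "\<forall>u\<in>S. f u = u"
  have "f ` S = id ` S" by (rule image_cong) (simp_all add: a)
  then show ?thesis by simp
qed

lemma not_var_in: "var a \<notin> vars_cl P \<Longrightarrow> a \<notin> P \<and> comp a \<notin> P"
  unfolding vars_cl_def by (metis image_eqI var_comp)

lemma iso:
  assumes mu: "min_unsat F" and C: "C \<in> F" "x \<in> C" "y \<in> C" "x \<noteq> y"
    and onlyx: "\<forall>E\<in>F. x \<in> E \<longrightarrow> E = C" and onlyy: "\<forall>E\<in>F. y \<in> E \<longrightarrow> E = C"
    and hx: "\<forall>D\<in>F. comp x \<in> D \<longrightarrow> C - {x, y} \<subseteq> D"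
    and hy: "\<forall>D\<in>F. comp y \<in> D \<longrightarrow> C - {y, x} \<subseteq> D"
  shows "isomorphic (DP (var x) F) (DP (var y) F)"
proof -
  define f where "f u = (if u = x then comp y else if u = comp y then x else
     if u = comp x then y else if u = y then comp x else u)" for u
  have vxy: "var x \<noteq> var y" using var_ne[OF mu C(1,2,3,4)] .
  have d1: "x \<noteq> comp y" using vxy by (metis var_comp)
  have d2: "y \<noteq> comp x" using vxy by (metis var_comp)
  have d3: "comp x \<noteq> comp y" using C(4) by simp
  have ff: "f (f u) = u" for u
    unfolding f_def using d1 d2 d3 C(4) by (auto simp: comp_eq_iff)
  have bij: "bij f"
  proof (rule o_bij[of f f])
    show "f \<circ> f = id" by (rule ext) (simp add: ff)
    show "f \<circ> f = id" by (rule ext) (simp add: ff)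
  qed
  have fc: "\<forall>u. f (comp u) = comp (f u)"
    unfolding f_def using d1 d2 d3 C(4) by (auto simp: comp_eq_iff)
  define A where "A = {P\<in>F. var x \<notin> vars_cl P \<and> var y \<notin> vars_cl P}"
  define Fx where "Fx = {D\<in>F. comp x \<in> D}"
  define Fy where "Fy = {D\<in>F. comp y \<in> D}"
  have Gx: "DP (var x) F = A \<union> Fy \<union> (\<lambda>D. insert y (D - {comp x})) ` Fx"
    unfolding A_def Fx_def Fy_def by (rule DPeq[OF mu C onlyx onlyy hx])
  have Gy: "DP (var y) F = A \<union> Fx \<union> (\<lambda>D. insert x (D - {comp y})) ` Fy"
    unfolding A_def Fx_def Fy_def using DPeq[OF mu C(1,3,2) C(4)[symmetric] onlyy onlyx hy]
    by (simp add: conj_commute)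
  have iA: "(\<lambda>P. f ` P) ` A = A"
  proof (rule fix_img, intro ballI)
    fix P assume "P \<in> A"
    then have "x \<notin> P \<and> comp x \<notin> P" "y \<notin> P \<and> comp y \<notin> P"
      unfolding A_def using not_var_in by blast+
    then have "\<forall>u\<in>P. f u = u" unfolding f_def by auto
    then show "f ` P = P" by (rule fix_img)
  qed
  have iFy: "(\<lambda>P. f ` P) ` Fy = (\<lambda>D. insert x (D - {comp y})) ` Fy"
  proof (rule image_cong[OF refl])
    fix E assume E: "E \<in> Fy"
    then have E1: "E \<in> F" "comp y \<in> E" unfolding Fy_def by auto
    have nx: "x \<notin> E"
    proof
      assume "x \<in> E"
      then have "E = C" using onlyx E1(1) by blast
      then show False using mu_clause[OF mu C(1) C(3)] E1(2) by blast
    qed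
    have ncx: "comp x \<notin> E" using noboth[OF mu C(1,2) onlyx C(3) C(4)[symmetric] E1(1)] E1(2) by blast
    have ny: "y \<notin> E" using mu_clause[OF mu E1(1) E1(2)] by simp
    have "\<forall>u\<in>E - {comp y}. f u = u" unfolding f_def using nx ncx ny by auto
    then have "f ` (E - {comp y}) = E - {comp y}" by (rule fix_img)
    moreover have "E = insert (comp y) (E - {comp y})" using E1(2) by blast
    moreover have "f (comp y) = x" unfolding f_def using d1 by simp
    ultimately show "f ` E = insert x (E - {comp y})" by (metis image_insert)
  qed
  have iFx: "(\<lambda>P. f ` P) ` ((\<lambda>D. insert y (D - {comp x})) ` Fx) = Fx"
  proof -
    have "(\<lambda>P. f ` P) ` ((\<lambda>D. insert y (D - {comp x})) ` Fx) = (\<lambda>D. f ` insert y (D - {comp x})) ` Fx"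
      by (simp add: image_image)
    also have "\<dots> = id ` Fx"
    proof (rule image_cong[OF refl])
      fix D assume D: "D \<in> Fx"
      then have D1: "D \<in> F" "comp x \<in> D" unfolding Fx_def by auto
      have ny: "y \<notin> D"
      proof
        assume "y \<in> D"
        then have "D = C" using onlyy D1(1) by blast
        then show False using mu_clause[OF mu C(1) C(2)] D1(2) by blast
      qed
      have ncy: "comp y \<notin> D" using noboth[OF mu C(1,2) onlyx C(3) C(4)[symmetric] D1(1)] D1(2) by blast
      have nx: "x \<notin> D" using mu_clause[OF mu D1(1) D1(2)] by simp
      have "\<forall>u\<in>D - {comp x}. f u = u" unfolding f_def using nx ncy ny by auto
      then have "f ` (D - {comp x}) = D - {comp x}" by (rule fix_img)
      moreover have "f y = comp x" unfolding f_def using d1 d2 C(4) by simp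
      ultimately have "f ` insert y (D - {comp x}) = insert (comp x) (D - {comp x})" by simp
      also have "\<dots> = D" using D1(2) by blast
      finally show "f ` insert y (D - {comp x}) = id D" by simp
    qed
    finally show ?thesis by simp
  qed
  have "(\<lambda>P. f ` P) ` DP (var x) F = DP (var y) F"
    unfolding Gx Gy image_Un iA iFy iFx by blast
  then show ?thesis unfolding isomorphic_def using bij fc by blast
qed



theorem lemma68:
  fixes F :: "'v cls" and C :: "'v clause"
  assumes "min_unsat F"
    and "C \<in> F"
    and "C' = {x\<in>C. ldeg F x = 1}"
    and "card C' \<ge> 2"
    and "\<forall>x\<in>C'. saturated_min_unsat (DP (var x) F)"
  shows "card C' = 2
    \<and> (\<forall>x\<in>C'. \<forall>D\<in>{D\<in>F. comp x \<in> D}. C - C' \<subseteq> D)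
    \<and> (\<forall>x\<in>C'. \<forall>y\<in>C'. isomorphic (DP (var x) F) (DP (var y) F))"
proof -
  note mu = assms(1)
  note CF = assms(2)
  have fin: "finite F" using mu_finite[OF mu] .
  have C'C: "x \<in> C'  \<Longrightarrow> x \<in> C" for x using assms(3) by blast
  have only: "x \<in> C' \<Longrightarrow> \<forall>E\<in>F. x \<in> E \<longrightarrow> E = C" for x
    using deg1_only[OF fin CF, of x] assms(3) by blast
  have satG: "x \<in> C' \<Longrightarrow> saturated_min_unsat (DP (var x) F)" for x using assms(5) by blast
  have muG: "x \<in> C' \<Longrightarrow> min_unsat (DP (var x) F)" for x
    using satG[of x] by (simp add: saturated_min_unsat_def)
  have finC': "finite C'" using assms(4) by (metis card.infinite not_numeral_le_zero)
  have other: "x \<in> C' \<Longrightarrow> \<exists>y\<in>C'. y \<noteq> x" for x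
  proof (rule ccontr)
    assume x: "x \<in> C'" and n: "\<not> (\<exists>y\<in>C'. y \<noteq> x)"
    then have "C' = {x}" by blast
    then show False using assms(4) by simp
  qed
  have c1: "card C' = 2"
  proof (rule ccontr)
    assume "card C' \<noteq> 2"
    then have c3: "card C' \<ge> 3" using assms(4) by simp
    obtain x where x: "x \<in> C'" using c3 by fastforce
    have "card (C' - {x}) \<ge> 2" using c3 x by (simp add: card_Diff_singleton)
    then have "C' - {x} \<noteq> {}" by (metis card.empty not_numeral_le_zero)
    then obtain y where y: "y \<in> C' - {x}" by blast
    have "card (C' - {x} - {y}) \<ge> 1" using \<open>card (C' - {x}) \<ge> 2\<close> y by (simp add: card_Diff_singleton)
    then have "C' - {x} - {y} \<noteq> {}" by (metis card.empty not_one_le_zero)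
    then obtain w where w: "w \<in> C' - {x} - {y}" by blast
    have xC: "x \<in> C" and yC: "y \<in> C" and wC: "w \<in> C" using x y w C'C by auto
    have yx: "y \<noteq> x" and wx: "w \<noteq> x" and wy: "w \<noteq> y" using y w by auto
    let ?G = "DP (var x) F"
    obtain P where P: "P \<in> ?G" "y \<in> P" using F4[OF mu CF xC only[OF x] muG[OF x] yC yx] by blast
    obtain Q where Q: "Q \<in> ?G" "comp y \<in> Q" using no_pure[OF muG[OF x] P] by blast
    have wQ: "w \<in> Q"
      using keyL[OF satG[OF x] var_ne[OF mu CF yC wC wy[symmetric]]
          F3[OF mu CF xC only[OF x] yC only[of y] wC wx]
          F4[OF mu CF xC only[OF x] muG[OF x] wC wx] Q] y by blast
    have "y \<in> Q" using F3[OF mu CF xC only[OF x] wC only[of w] yC yx] wQ Q(1) w by blast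
    then show False using mu_clause[OF muG[OF x] Q(1)] Q(2) by simp
  qed
  have c2: "\<forall>x\<in>C'. \<forall>D\<in>{D\<in>F. comp x \<in> D}. C - C' \<subseteq> D"
  proof (intro ballI subsetI)
    fix x D z assume x: "x \<in> C'" and D: "D \<in> {D\<in>F. comp x \<in> D}" and z: "z \<in> C - C'"
    have D1: "D \<in> F" "comp x \<in> D" using D by auto
    obtain y where y: "y \<in> C'" "y \<noteq> x" using other[OF x] by blast
    have xC: "x \<in> C" and yC: "y \<in> C" and zC: "z \<in> C" using x y z C'C by auto
    have zx: "z \<noteq> x" and zy: "z \<noteq> y" using x y z by auto
    have ny: "comp y \<notin> D" using noboth[OF mu CF xC only[OF x] yC y(2) D1(1,2)] by blast
    have yD: "y \<notin> D"
    proof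
      assume "y \<in> D"
      then have "D = C" using only[OF y(1)] D1(1) by blast
      then show False using mu_clause[OF mu CF xC] D1(2) by blast
    qed
    have "var y \<notin> vars_cl D"
    proof
      assume "var y \<in> vars_cl D"
      then obtain u where "u \<in> D" "var y = var u" unfolding vars_cl_def by (rule imageE)
      then show False using var_eq[of u y] ny yD by auto
    qed
    then have DG: "D \<in> DP (var y) F" using DP_char[OF CF yC only[OF y(1)], of D] D1(1) by blast
    show "z \<in> D"
      using keyL[OF satG[OF y(1)] var_ne[OF mu CF xC zC zx[symmetric]]
          F3[OF mu CF yC only[OF y(1)] xC only[OF x] zC zy]
          F4[OF mu CF yC only[OF y(1)] muG[OF y(1)] zC zy] DG D1(2)] .
  qed
  have c3: "\<forall>x\<in>C'. \<forall>y\<in>C'. isomorphic (DP (var x) F) (DP (var y) F)"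
  proof (intro ballI)
    fix x y assume x: "x \<in> C'" and y: "y \<in> C'"
    show "isomorphic (DP (var x) F) (DP (var y) F)"
    proof (cases "x = y")
      case True
      have "bij (id :: 'v lit \<Rightarrow> 'v lit)" by simp
      moreover have "(\<lambda>C. id ` C) ` DP (var x) F = DP (var y) F" using True by simp
      ultimately show ?thesis unfolding isomorphic_def by (metis id_apply)
    next
      case False
      have "{x, y} \<subseteq> C'" using x y by blast
      moreover have "card {x, y} = 2" using False by simp
      ultimately have C'eq: "C' = {x, y}" using c1 finC' by (metis card_subset_eq)
      have xC: "x \<in> C" and yC: "y \<in> C" using x y C'C by auto
      have hx: "\<forall>D\<in>F. comp x \<in> D \<longrightarrow> C - {x, y} \<subseteq> D" using c2 x C'eq by blast
      have hy: "\<forall>D\<in>F. comp y \<in> D \<longrightarrow> C - {y, x} \<subseteq> D" using c2 y C'eq by blast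
      show ?thesis using iso[OF mu CF xC yC False only[OF x] only[OF y] hx hy] .
    qed
  qed
  show ?thesis using c1 c2 c3 by blast
qed

end
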